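(* Let $X,Y$ be countable discrete metric spaces and $d,d'\in D(X,Y)$. Consider the conditions: (i) $d$ and $d'$ are coarsely equivalent, i.e. there is a nondecreasing function $\varphi:[0,\infty)\to[0,\infty)$ with $d'(x,y)\le\varphi(d(x,y))$ and $d(x,y)\le\varphi(d'(x,y))$ for all $x\in X$, $y\in Y$; (ii) $M_{d'}(X,Y)=M_d(X,Y)$. Then (i) implies (ii). If moreover $X$ and $Y$ are uniformly discrete ($\inf_{x\ne x'}d_X(x,x')>0$, similarly for $Y$) and proper (every ball contains finitely many points), then (ii) implies (i).
   Context: $H_X=l^2(X)$ with basis $\{\delta_x\}$. $D(X,Y)$ is the set of metrics on $X\sqcup Y$ restricting to $d_X$ and $d_Y$. For $T:H_X\to H_Y$ bounded, $T_{yx}=\langle T\delta_x,\delta_y\rangle$; $T$ has propagation less than $L$ w.r.t. $d$ if $T_{yx}=0$ whenever $d(x,y)\ge L$. $M_d(X,Y)$ is the norm closure in $\mathbb B(H_X,H_Y)$ of the bounded operators of finite propagation w.r.t. $d$. *)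

theory Defs
  imports "HOL-Analysis.Analysis"
begin

definition metric_on :: "'a set \<Rightarrow> ('a \<Rightarrow> 'a \<Rightarrow> real) \<Rightarrow> bool" where
  "metric_on S d \<longleftrightarrow>
     (\<forall>x\<in>S. \<forall>y\<in>S. d x y \<ge> 0 \<and> (d x y = 0 \<longleftrightarrow> x = y) \<and> d x y = d y x) \<and>
     (\<forall>x\<in>S. \<forall>y\<in>S. \<forall>z\<in>S. d x z \<le> d x y + d y z)"

definition discrete_metric_on :: "'a set \<Rightarrow> ('a \<Rightarrow> 'a \<Rightarrow> real) \<Rightarrow> bool" where
  "discrete_metric_on S d \<longleftrightarrow> metric_on S d \<and>
     (\<forall>x\<in>S. \<exists>e>0. \<forall>x'\<in>S. d x x' < e \<longrightarrow> x' = x)"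

definition uniformly_discrete_on :: "'a set \<Rightarrow> ('a \<Rightarrow> 'a \<Rightarrow> real) \<Rightarrow> bool" where
  "uniformly_discrete_on S d \<longleftrightarrow> (\<exists>c>0. \<forall>x\<in>S. \<forall>x'\<in>S. x \<noteq> x' \<longrightarrow> c \<le> d x x')"

definition proper_on :: "'a set \<Rightarrow> ('a \<Rightarrow> 'a \<Rightarrow> real) \<Rightarrow> bool" where
  "proper_on S d \<longleftrightarrow> (\<forall>x\<in>S. \<forall>r. finite {x'\<in>S. d x x' \<le> r})"

definition Dmetrics :: "'a set \<Rightarrow> ('a \<Rightarrow> 'a \<Rightarrow> real) \<Rightarrow> 'b set \<Rightarrow> ('b \<Rightarrow> 'b \<Rightarrow> real)
    \<Rightarrow> (('a + 'b) \<Rightarrow> ('a + 'b) \<Rightarrow> real) set" where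
  "Dmetrics X dX Y dY = {d. metric_on (Inl ` X \<union> Inr ` Y) d \<and>
      (\<forall>x\<in>X. \<forall>x'\<in>X. d (Inl x) (Inl x') = dX x x') \<and>
      (\<forall>y\<in>Y. \<forall>y'\<in>Y. d (Inr y) (Inr y') = dY y y')}"

definition l2vec :: "'a set \<Rightarrow> ('a \<Rightarrow> complex) \<Rightarrow> bool" where
  "l2vec X f \<longleftrightarrow> (\<forall>x. x \<notin> X \<longrightarrow> f x = 0) \<and> (\<lambda>x. (cmod (f x))\<^sup>2) summable_on X"

definition l2norm :: "'a set \<Rightarrow> ('a \<Rightarrow> complex) \<Rightarrow> real" where
  "l2norm X f = sqrt (\<Sum>\<^sub>\<infinity>x\<in>X. (cmod (f x))\<^sup>2)"

text \<open>Operators H_X \<rightarrow> H_Y are represented by their matrices T y x = T_{yx} = <T \<delta>_x, \<delta>_y>.\<close>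
definition op_apply :: "'a set \<Rightarrow> ('b \<Rightarrow> 'a \<Rightarrow> complex) \<Rightarrow> ('a \<Rightarrow> complex) \<Rightarrow> ('b \<Rightarrow> complex)" where
  "op_apply X T f = (\<lambda>y. \<Sum>\<^sub>\<infinity>x\<in>X. T y x * f x)"

text \<open>A matrix defines a bounded operator l^2(X) \<rightarrow> l^2(Y) (and every bounded operator
  arises this way from its matrix).\<close>
definition bounded_op :: "'a set \<Rightarrow> 'b set \<Rightarrow> ('b \<Rightarrow> 'a \<Rightarrow> complex) \<Rightarrow> bool" where
  "bounded_op X Y T \<longleftrightarrow> (\<forall>y x. y \<notin> Y \<or> x \<notin> X \<longrightarrow> T y x = 0) \<and>
     (\<exists>C. \<forall>f. l2vec X f \<longrightarrow>
        (\<forall>y\<in>Y. (\<lambda>x. T y x * f x) summable_on X) \<and>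
        l2vec Y (op_apply X T f) \<and> l2norm Y (op_apply X T f) \<le> C * l2norm X f)"

definition opnorm :: "'a set \<Rightarrow> 'b set \<Rightarrow> ('b \<Rightarrow> 'a \<Rightarrow> complex) \<Rightarrow> real" where
  "opnorm X Y T = Sup {l2norm Y (op_apply X T f) | f. l2vec X f \<and> l2norm X f \<le> 1}"

definition finite_propagation :: "'a set \<Rightarrow> 'b set \<Rightarrow> (('a + 'b) \<Rightarrow> ('a + 'b) \<Rightarrow> real)
    \<Rightarrow> ('b \<Rightarrow> 'a \<Rightarrow> complex) \<Rightarrow> bool" where
  "finite_propagation X Y d T \<longleftrightarrow>
     (\<exists>L. \<forall>x\<in>X. \<forall>y\<in>Y. d (Inl x) (Inr y) \<ge> L \<longrightarrow> T y x = 0)"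

definition Md :: "'a set \<Rightarrow> 'b set \<Rightarrow> (('a + 'b) \<Rightarrow> ('a + 'b) \<Rightarrow> real)
    \<Rightarrow> ('b \<Rightarrow> 'a \<Rightarrow> complex) set" where
  "Md X Y d = {T. bounded_op X Y T \<and>
      (\<forall>e>0. \<exists>S. bounded_op X Y S \<and> finite_propagation X Y d S \<and>
                  opnorm X Y (\<lambda>y x. T y x - S y x) < e)}"

definition coarsely_equivalent :: "'a set \<Rightarrow> 'b set \<Rightarrow> (('a + 'b) \<Rightarrow> ('a + 'b) \<Rightarrow> real)
    \<Rightarrow> (('a + 'b) \<Rightarrow> ('a + 'b) \<Rightarrow> real) \<Rightarrow> bool" where
  "coarsely_equivalent X Y d d' \<longleftrightarrow>
     (\<exists>\<phi>::real \<Rightarrow> real. mono_on {0..} \<phi> \<and> (\<forall>t\<ge>0. \<phi> t \<ge> 0) \<and>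
        (\<forall>x\<in>X. \<forall>y\<in>Y. d' (Inl x) (Inr y) \<le> \<phi> (d (Inl x) (Inr y)) \<and>
                        d (Inl x) (Inr y) \<le> \<phi> (d' (Inl x) (Inr y))))"

end

theory Submission
  imports Defs
begin


lemma infsum_diff':
  fixes f g :: "'a \<Rightarrow> 'b::{topological_ab_group_add, t2_space}"
  assumes "f summable_on A" "g summable_on A"
  shows "infsum (\<lambda>x. f x - g x) A = infsum f A - infsum g A"
  using infsum_add[of f A "\<lambda>x. - g x"] assms summable_on_uminus[of g A] infsum_uminus[of g A]
  by simp

lemma l2norm_nonneg: "l2norm X f \<ge> 0"
  unfolding l2norm_def by (simp add: infsum_nonneg)

lemma sq_diff_le: "(cmod (a - b))\<^sup>2 \<le> 2 * (cmod a)\<^sup>2 + 2 * (cmod b)\<^sup>2"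
proof -
  have "cmod (a - b) \<le> cmod a + cmod b" by (rule norm_triangle_ineq4)
  then have "(cmod (a - b))\<^sup>2 \<le> (cmod a + cmod b)\<^sup>2" by (simp add: power_mono)
  also have "\<dots> \<le> 2 * (cmod a)\<^sup>2 + 2 * (cmod b)\<^sup>2"
  proof -
    have "0 \<le> (cmod a - cmod b)\<^sup>2" by simp
    then show ?thesis by (simp add: power2_eq_square algebra_simps)
  qed
  finally show ?thesis .
qed

lemma bounded_op_bound:
  assumes "bounded_op X Y T"
  obtains C where "\<And>f. l2vec X f \<Longrightarrow> l2norm X f \<le> 1 \<Longrightarrow>
        (\<forall>y\<in>Y. (\<lambda>x. T y x * f x) summable_on X) \<and>
        l2vec Y (op_apply X T f) \<and> (l2norm Y (op_apply X T f))\<^sup>2 \<le> C"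
proof -
  obtain C where C: "\<And>f. l2vec X f \<Longrightarrow>
        (\<forall>y\<in>Y. (\<lambda>x. T y x * f x) summable_on X) \<and>
        l2vec Y (op_apply X T f) \<and> l2norm Y (op_apply X T f) \<le> C * l2norm X f"
    using assms(1) unfolding bounded_op_def by blast
  show ?thesis
  proof (rule that[of "C\<^sup>2"])
    fix f assume f: "l2vec X f" "l2norm X f \<le> 1"
    have "l2norm Y (op_apply X T f) \<le> \<bar>C\<bar>"
    proof -
      have "C * l2norm X f \<le> \<bar>C\<bar> * l2norm X f" by (simp add: l2norm_nonneg mult_right_mono)
      also have "\<dots> \<le> \<bar>C\<bar>" using f(2) l2norm_nonneg[of X f] by (simp add: mult_left_le)
      finally show ?thesis using C[OF f(1)] by linarith
    qed
    then have "(l2norm Y (op_apply X T f))\<^sup>2 \<le> \<bar>C\<bar>\<^sup>2"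
      using l2norm_nonneg by (intro power_mono) auto
    then show "(\<forall>y\<in>Y. (\<lambda>x. T y x * f x) summable_on X) \<and>
        l2vec Y (op_apply X T f) \<and> (l2norm Y (op_apply X T f))\<^sup>2 \<le> C\<^sup>2"
      using C[OF f(1)] by simp
  qed
qed


lemma op_apply_diff:
  assumes T: "bounded_op X Y T" and S: "bounded_op X Y S"
    and sT: "\<forall>y\<in>Y. (\<lambda>x. T y x * f x) summable_on X"
    and sS: "\<forall>y\<in>Y. (\<lambda>x. S y x * f x) summable_on X"
  shows "op_apply X (\<lambda>y x. T y x - S y x) f y = op_apply X T f y - op_apply X S f y"
proof (cases "y \<in> Y")
  case True
  have "op_apply X (\<lambda>y x. T y x - S y x) f y = infsum (\<lambda>x. T y x * f x - S y x * f x) X"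
    unfolding op_apply_def by (simp add: algebra_simps)
  also have "\<dots> = op_apply X T f y - op_apply X S f y"
    unfolding op_apply_def using sT sS True by (simp add: infsum_diff')
  finally show ?thesis .
next
  case False
  then have "\<And>x. T y x = 0" "\<And>x. S y x = 0" using T S unfolding bounded_op_def by auto
  then show ?thesis unfolding op_apply_def by simp
qed

lemma diff_bound:
  assumes T: "bounded_op X Y T" and S: "bounded_op X Y S"
  obtains K where "\<And>f. l2vec X f \<Longrightarrow> l2norm X f \<le> 1 \<Longrightarrow>
     (\<lambda>y. (cmod (op_apply X (\<lambda>y x. T y x - S y x) f y))\<^sup>2) summable_on Y \<and>
     l2norm Y (op_apply X (\<lambda>y x. T y x - S y x) f) \<le> K"
proof -
  obtain CT where CT: "\<And>f. l2vec X f \<Longrightarrow> l2norm X f \<le> 1 \<Longrightarrow>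
        (\<forall>y\<in>Y. (\<lambda>x. T y x * f x) summable_on X) \<and>
        l2vec Y (op_apply X T f) \<and> (l2norm Y (op_apply X T f))\<^sup>2 \<le> CT"
    using bounded_op_bound[OF T] by blast
  obtain CS where CS: "\<And>f. l2vec X f \<Longrightarrow> l2norm X f \<le> 1 \<Longrightarrow>
        (\<forall>y\<in>Y. (\<lambda>x. S y x * f x) summable_on X) \<and>
        l2vec Y (op_apply X S f) \<and> (l2norm Y (op_apply X S f))\<^sup>2 \<le> CS"
    using bounded_op_bound[OF S] by blast
  show ?thesis
  proof (rule that[of "sqrt (2 * CT + 2 * CS)"])
    fix f assume f: "l2vec X f" "l2norm X f \<le> 1"
    define g where "g = op_apply X T f"
    define h where "h = op_apply X S f"
    have eq: "op_apply X (\<lambda>y x. T y x - S y x) f = (\<lambda>y. g y - h y)"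
      using op_apply_diff[OF T S] CT[OF f] CS[OF f] unfolding g_def h_def by blast
    have gs: "(\<lambda>y. (cmod (g y))\<^sup>2) summable_on Y" and hs: "(\<lambda>y. (cmod (h y))\<^sup>2) summable_on Y"
      using CT[OF f] CS[OF f] unfolding g_def h_def l2vec_def by auto
    have gA: "infsum (\<lambda>y. (cmod (g y))\<^sup>2) Y = (l2norm Y g)\<^sup>2"
      unfolding l2norm_def by (simp add: infsum_nonneg)
    have hA: "infsum (\<lambda>y. (cmod (h y))\<^sup>2) Y = (l2norm Y h)\<^sup>2"
      unfolding l2norm_def by (simp add: infsum_nonneg)
    have bs: "(\<lambda>y. 2 * (cmod (g y))\<^sup>2 + 2 * (cmod (h y))\<^sup>2) summable_on Y"
      by (intro summable_on_add summable_on_cmult_right gs hs)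
    have ds: "(\<lambda>y. (cmod (g y - h y))\<^sup>2) summable_on Y"
      by (rule summable_on_comparison_test[OF bs]) (auto simp: sq_diff_le)
    have "infsum (\<lambda>y. (cmod (g y - h y))\<^sup>2) Y \<le>
          infsum (\<lambda>y. 2 * (cmod (g y))\<^sup>2 + 2 * (cmod (h y))\<^sup>2) Y"
      by (rule infsum_mono[OF ds bs]) (simp add: sq_diff_le)
    also have "\<dots> = 2 * (l2norm Y g)\<^sup>2 + 2 * (l2norm Y h)\<^sup>2"
      using infsum_add[OF summable_on_cmult_right[OF gs] summable_on_cmult_right[OF hs]]
        infsum_cmult_right[OF gs] infsum_cmult_right[OF hs] gA hA
      by (simp add: infsum_cmult_right')
    also have "\<dots> \<le> 2 * CT + 2 * CS"
      using CT[OF f] CS[OF f] unfolding g_def h_def by simp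
    finally have "infsum (\<lambda>y. (cmod (g y - h y))\<^sup>2) Y \<le> 2 * CT + 2 * CS" .
    then show "(\<lambda>y. (cmod (op_apply X (\<lambda>y x. T y x - S y x) f y))\<^sup>2) summable_on Y \<and>
     l2norm Y (op_apply X (\<lambda>y x. T y x - S y x) f) \<le> sqrt (2 * CT + 2 * CS)"
      unfolding eq l2norm_def using ds by simp
  qed
qed

lemma delta_l2:
  assumes "x \<in> X"
  shows "l2vec X (\<lambda>x'. if x' = x then 1 else 0)" "l2norm X (\<lambda>x'. if x' = x then 1 else 0) = 1"
proof -
  have e: "infsum (\<lambda>x'. (cmod (if x' = x then 1 else 0 :: complex))\<^sup>2) X
      = infsum (\<lambda>x'. (cmod (if x' = x then 1 else 0 :: complex))\<^sup>2) {x}"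
    by (rule infsum_cong_neutral) (use assms in auto)
  have s: "(\<lambda>x'. (cmod (if x' = x then 1 else 0 :: complex))\<^sup>2) summable_on X
      \<longleftrightarrow> (\<lambda>x'. (cmod (if x' = x then 1 else 0 :: complex))\<^sup>2) summable_on {x}"
    by (rule summable_on_cong_neutral) (use assms in auto)
  show "l2vec X (\<lambda>x'. if x' = x then 1 else 0)" unfolding l2vec_def using s assms by auto
  show "l2norm X (\<lambda>x'. if x' = x then 1 else 0) = 1" unfolding l2norm_def e by simp
qed

lemma op_apply_delta:
  assumes "x \<in> X"
  shows "op_apply X U (\<lambda>x'. if x' = x then 1 else 0) = (\<lambda>y. U y x)"
proof
  fix y
  have "infsum (\<lambda>x'. U y x' * (if x' = x then 1 else 0)) X
      = infsum (\<lambda>x'. U y x' * (if x' = x then 1 else 0)) {x}"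
    by (rule infsum_cong_neutral) (use assms in auto)
  then show "op_apply X U (\<lambda>x'. if x' = x then 1 else 0) y = U y x"
    unfolding op_apply_def by simp
qed

lemma entry_le_opnorm:
  assumes T: "bounded_op X Y T" and S: "bounded_op X Y S" and xy: "x \<in> X" "y \<in> Y"
  shows "cmod (T y x - S y x) \<le> opnorm X Y (\<lambda>y x. T y x - S y x)"
proof -
  obtain K where K: "\<And>f. l2vec X f \<Longrightarrow> l2norm X f \<le> 1 \<Longrightarrow>
     (\<lambda>y. (cmod (op_apply X (\<lambda>y x. T y x - S y x) f y))\<^sup>2) summable_on Y \<and>
     l2norm Y (op_apply X (\<lambda>y x. T y x - S y x) f) \<le> K"
    using diff_bound[OF T S] by blast
  define \<delta> where "\<delta> = (\<lambda>x'. if x' = x then 1 else (0::complex))"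
  have d1: "l2vec X \<delta>" "l2norm X \<delta> \<le> 1" using delta_l2[OF xy(1)] unfolding \<delta>_def by auto
  have opd: "op_apply X (\<lambda>y x. T y x - S y x) \<delta> = (\<lambda>y. T y x - S y x)"
    unfolding \<delta>_def by (rule op_apply_delta[OF xy(1)])
  have sm: "(\<lambda>y'. (cmod (T y' x - S y' x))\<^sup>2) summable_on Y" using K[OF d1] opd by simp
  have "(cmod (T y x - S y x))\<^sup>2 = sum (\<lambda>y'. (cmod (T y' x - S y' x))\<^sup>2) {y}" by simp
  also have "\<dots> \<le> infsum (\<lambda>y'. (cmod (T y' x - S y' x))\<^sup>2) Y"
    by (rule finite_sum_le_infsum[OF sm]) (use xy in auto)
  finally have "cmod (T y x - S y x) \<le> l2norm Y (op_apply X (\<lambda>y x. T y x - S y x) \<delta>)"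
    unfolding opd l2norm_def using real_le_rsqrt by blast
  also have "\<dots> \<le> opnorm X Y (\<lambda>y x. T y x - S y x)"
    unfolding opnorm_def
  proof (rule cSup_upper)
    show "l2norm Y (op_apply X (\<lambda>y x. T y x - S y x) \<delta>)
      \<in> {l2norm Y (op_apply X (\<lambda>y x. T y x - S y x) f) |f. l2vec X f \<and> l2norm X f \<le> 1}"
      using d1 by blast
    show "bdd_above {l2norm Y (op_apply X (\<lambda>y x. T y x - S y x) f) |f. l2vec X f \<and> l2norm X f \<le> 1}"
      using K by (auto intro!: bdd_aboveI[of _ K])
  qed
  finally show ?thesis .
qed



lemma seq_choice:
  fixes P :: "'a \<times> 'b \<Rightarrow> bool" and w :: "'a \<times> 'b \<Rightarrow> real"
  assumes H: "\<And>A B L. finite A \<Longrightarrow> finite B \<Longrightarrow> \<exists>q. P q \<and> fst q \<notin> A \<and> snd q \<notin> B \<and> L \<le> w q"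
  obtains p :: "nat \<Rightarrow> 'a \<times> 'b" where "inj (fst \<circ> p)" "inj (snd \<circ> p)" "\<And>n. P (p n)"
    "\<And>L. \<exists>n. L \<le> w (p n)"
proof -
  define step where "step = (\<lambda>ps (n::nat). SOME q. P q \<and> fst q \<notin> fst ` set ps \<and> snd q \<notin> snd ` set ps \<and> real n \<le> w q)"
  have st: "P (step ps n) \<and> fst (step ps n) \<notin> fst ` set ps \<and> snd (step ps n) \<notin> snd ` set ps \<and> real n \<le> w (step ps n)" for ps n
    unfolding step_def by (rule someI_ex) (rule H; simp)
  define ls where "ls = rec_nat [] (\<lambda>n ps. step ps n # ps)"
  define p where "p = (\<lambda>n. step (ls n) n)"
  have ls_set: "set (ls n) = p ` {..<n}" for n
    by (induction n) (auto simp: ls_def p_def lessThan_Suc)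
  have pn: "P (p n) \<and> fst (p n) \<notin> fst ` p ` {..<n} \<and> snd (p n) \<notin> snd ` p ` {..<n} \<and> real n \<le> w (p n)" for n
    using st[of "ls n" n] ls_set[of n] unfolding p_def by simp
  have injf: "inj (fst \<circ> p)"
  proof (rule injI)
    fix m n assume e: "(fst \<circ> p) m = (fst \<circ> p) n"
    show "m = n"
    proof (rule ccontr)
      assume "m \<noteq> n"
      then have "m < n \<or> n < m" by arith
      then show False using pn[of n] pn[of m] e by (metis comp_apply imageI lessThan_iff)
    qed
  qed
  have injs: "inj (snd \<circ> p)"
  proof (rule injI)
    fix m n assume e: "(snd \<circ> p) m = (snd \<circ> p) n"
    show "m = n"
    proof (rule ccontr)
      assume "m \<noteq> n"
      then have "m < n \<or> n < m" by arith
      then show False using pn[of n] pn[of m] e by (metis comp_apply imageI lessThan_iff)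
    qed
  qed
  show ?thesis
  proof (rule that[OF injf injs])
    show "P (p n)" for n using pn by blast
    show "\<exists>n. L \<le> w (p n)" for L
    proof -
      obtain n where "L < real n" using reals_Archimedean2 by blast
      then show ?thesis using pn[of n] by (intro exI[of _ n]) linarith
    qed
  qed
qed



lemma pbij_op:
  fixes p :: "nat \<Rightarrow> 'a \<times> 'b"
  assumes injs: "inj (snd \<circ> p)" and XY: "\<And>n. fst (p n) \<in> X \<and> snd (p n) \<in> Y"
  shows "op_apply X (\<lambda>y x. if (x, y) \<in> range p then 1 else 0) f (snd (p n)) = f (fst (p n))"
    and "(\<lambda>x. (if (x, snd (p n)) \<in> range p then 1 else 0) * f x) summable_on X"
    and "y \<notin> snd ` range p \<Longrightarrow> op_apply X (\<lambda>y x. if (x, y) \<in> range p then 1 else 0) f y = 0"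
    and "y \<notin> snd ` range p \<Longrightarrow> (\<lambda>x. (if (x, y) \<in> range p then 1 else 0) * f x) summable_on X"
proof -
  have uq: "(x, snd (p n)) \<in> range p \<longleftrightarrow> x = fst (p n)" for x
  proof
    assume "(x, snd (p n)) \<in> range p"
    then obtain m where m: "p m = (x, snd (p n))" by (metis rangeE)
    then have "(snd \<circ> p) m = (snd \<circ> p) n" by simp
    then have "m = n" using injs by (meson injD)
    then show "x = fst (p n)" using m by (metis fst_conv)
  next
    assume "x = fst (p n)" then show "(x, snd (p n)) \<in> range p" by (metis prod.collapse rangeI)
  qed
  have e: "infsum (\<lambda>x. (if (x, snd (p n)) \<in> range p then 1 else 0) * f x) X
      = infsum (\<lambda>x. (if (x, snd (p n)) \<in> range p then 1 else 0) * f x) {fst (p n)}"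
    by (rule infsum_cong_neutral) (use XY uq in auto)
  then show "op_apply X (\<lambda>y x. if (x, y) \<in> range p then 1 else 0) f (snd (p n)) = f (fst (p n))"
    unfolding op_apply_def using uq by simp
  have "(\<lambda>x. (if (x, snd (p n)) \<in> range p then 1 else 0) * f x) summable_on X \<longleftrightarrow>
       (\<lambda>x. (if (x, snd (p n)) \<in> range p then 1 else 0) * f x) summable_on {fst (p n)}"
    by (rule summable_on_cong_neutral) (use XY uq in auto)
  then show "(\<lambda>x. (if (x, snd (p n)) \<in> range p then 1 else 0) * f x) summable_on X" by simp
  assume y: "y \<notin> snd ` range p"
  then have z: "(x, y) \<notin> range p" for x by (metis image_eqI snd_conv)
  show "op_apply X (\<lambda>y x. if (x, y) \<in> range p then 1 else 0) f y = 0"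
    unfolding op_apply_def using z by simp
  show "(\<lambda>x. (if (x, y) \<in> range p then 1 else 0) * f x) summable_on X"
    using z by simp
qed

lemma pbij_bounded:
  fixes p :: "nat \<Rightarrow> 'a \<times> 'b"
  assumes injf: "inj (fst \<circ> p)" and injs: "inj (snd \<circ> p)"
    and XY: "\<And>n. fst (p n) \<in> X \<and> snd (p n) \<in> Y"
  shows "bounded_op X Y (\<lambda>y x. if (x, y) \<in> range p then 1 else 0)"
proof -
  define T where "T = (\<lambda>y x. if (x, y) \<in> range p then 1 else (0::complex))"
  have zero: "\<forall>y x. y \<notin> Y \<or> x \<notin> X \<longrightarrow> T y x = 0"
    unfolding T_def using XY by (metis fst_conv rangeE snd_conv)
  have main: "(\<forall>y\<in>Y. (\<lambda>x. T y x * f x) summable_on X) \<and>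
        l2vec Y (op_apply X T f) \<and> l2norm Y (op_apply X T f) \<le> 1 * l2norm X f"
    if f: "l2vec X f" for f
  proof -
    define R where "R = (snd \<circ> p) ` UNIV"
    have RY: "R \<subseteq> Y" unfolding R_def using XY by auto
    have s1: "\<forall>y\<in>Y. (\<lambda>x. T y x * f x) summable_on X"
    proof
      fix y assume "y \<in> Y"
      show "(\<lambda>x. T y x * f x) summable_on X"
      proof (cases "y \<in> snd ` range p")
        case True
        then obtain n where "y = snd (p n)" by auto
        then show ?thesis unfolding T_def using pbij_op(2)[OF injs XY] by simp
      next
        case False
        then show ?thesis unfolding T_def using pbij_op(4)[OF injs XY] by simp
      qed
    qed
    define h where "h = (\<lambda>y. (cmod (op_apply X T f y))\<^sup>2)"
    define g where "g = (\<lambda>x. (cmod (f x))\<^sup>2)"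
    have h0: "y \<notin> R \<Longrightarrow> op_apply X T f y = 0" for y
      unfolding T_def R_def using pbij_op(3)[OF injs XY] by (simp add: image_comp)
    have hp: "h \<circ> (snd \<circ> p) = g \<circ> (fst \<circ> p)"
      unfolding h_def g_def T_def using pbij_op(1)[OF injs XY] by auto
    have gX: "g summable_on X" using f unfolding l2vec_def g_def by simp
    have sub: "(fst \<circ> p) ` UNIV \<subseteq> X" using XY by auto
    have gS: "g summable_on (fst \<circ> p) ` UNIV" by (rule summable_on_subset_banach[OF gX sub])
    have hR: "h summable_on R"
      unfolding R_def summable_on_reindex[OF inj_on_subset[OF injs subset_UNIV]] hp
      using gS summable_on_reindex[OF inj_on_subset[OF injf subset_UNIV], of g] by blast
    have hY: "h summable_on Y \<longleftrightarrow> h summable_on R"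
      by (rule summable_on_cong_neutral) (use RY h0 in \<open>auto simp: h_def\<close>)
    have iY: "infsum h Y = infsum h R"
      by (rule infsum_cong_neutral) (use RY h0 in \<open>auto simp: h_def\<close>)
    have "infsum h R = infsum g ((fst \<circ> p) ` UNIV)"
      unfolding R_def infsum_reindex[OF inj_on_subset[OF injs subset_UNIV]] hp
        infsum_reindex[OF inj_on_subset[OF injf subset_UNIV]] ..
    also have "\<dots> \<le> infsum g X"
      by (rule infsum_mono_neutral[OF gS gX]) (use sub in \<open>auto simp: g_def\<close>)
    finally have "infsum h Y \<le> infsum g X" using iY by simp
    then have nb: "l2norm Y (op_apply X T f) \<le> l2norm X f"
      unfolding l2norm_def h_def g_def by simp
    have l2: "l2vec Y (op_apply X T f)"
      unfolding l2vec_def using hY hR h0 RY unfolding h_def by auto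
    show ?thesis using s1 l2 nb by simp
  qed
  show ?thesis unfolding bounded_op_def T_def[symmetric] using zero main by blast
qed



lemma fin_ball_x:
  assumes D: "d \<in> Dmetrics X dX Y dY" and pY: "proper_on Y dY" and x: "x \<in> X"
  shows "finite {y\<in>Y. d (Inl x) (Inr y) \<le> t}"
proof (cases "{y\<in>Y. d (Inl x) (Inr y) \<le> t} = {}")
  case True then show ?thesis by (simp only: True finite.emptyI)
next
  case False
  then obtain y0 where y0: "y0 \<in> Y" "d (Inl x) (Inr y0) \<le> t" by blast
  have m: "metric_on (Inl ` X \<union> Inr ` Y) d" and dy: "\<forall>y\<in>Y. \<forall>y'\<in>Y. d (Inr y) (Inr y') = dY y y'"
    using D unfolding Dmetrics_def by auto
  have "{y\<in>Y. d (Inl x) (Inr y) \<le> t} \<subseteq> {y\<in>Y. dY y0 y \<le> 2 * t}"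
  proof safe
    fix y assume y: "y \<in> Y" "d (Inl x) (Inr y) \<le> t"
    have a: "Inl x \<in> Inl ` X \<union> Inr ` Y" "Inr y \<in> Inl ` X \<union> Inr ` Y" "Inr y0 \<in> Inl ` X \<union> Inr ` Y"
      using x y y0 by auto
    have "d (Inr y0) (Inr y) \<le> d (Inr y0) (Inl x) + d (Inl x) (Inr y)"
      using m a unfolding metric_on_def by blast
    moreover have "d (Inr y0) (Inl x) = d (Inl x) (Inr y0)"
      using m a unfolding metric_on_def by metis
    ultimately show "dY y0 y \<le> 2 * t" using dy y y0 by force
  qed
  moreover have "finite {y\<in>Y. dY y0 y \<le> 2 * t}" using pY y0 unfolding proper_on_def by blast
  ultimately show ?thesis by (rule finite_subset)
qed

lemma fin_ball_y:
  assumes D: "d \<in> Dmetrics X dX Y dY" and pX: "proper_on X dX" and y: "y \<in> Y"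
  shows "finite {x\<in>X. d (Inl x) (Inr y) \<le> t}"
proof (cases "{x\<in>X. d (Inl x) (Inr y) \<le> t} = {}")
  case True then show ?thesis by (simp only: True finite.emptyI)
next
  case False
  then obtain x0 where x0: "x0 \<in> X" "d (Inl x0) (Inr y) \<le> t" by blast
  have m: "metric_on (Inl ` X \<union> Inr ` Y) d" and dx: "\<forall>x\<in>X. \<forall>x'\<in>X. d (Inl x) (Inl x') = dX x x'"
    using D unfolding Dmetrics_def by auto
  have "{x\<in>X. d (Inl x) (Inr y) \<le> t} \<subseteq> {x\<in>X. dX x0 x \<le> 2 * t}"
  proof safe
    fix x assume x: "x \<in> X" "d (Inl x) (Inr y) \<le> t"
    have a: "Inl x \<in> Inl ` X \<union> Inr ` Y" "Inr y \<in> Inl ` X \<union> Inr ` Y" "Inl x0 \<in> Inl ` X \<union> Inr ` Y"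
      using x y x0 by auto
    have "d (Inl x0) (Inl x) \<le> d (Inl x0) (Inr y) + d (Inr y) (Inl x)"
      using m a unfolding metric_on_def by blast
    moreover have "d (Inr y) (Inl x) = d (Inl x) (Inr y)"
      using m a unfolding metric_on_def by metis
    ultimately show "dX x0 x \<le> 2 * t" using dx x x0 by force
  qed
  moreover have "finite {x\<in>X. dX x0 x \<le> 2 * t}" using pX x0 unfolding proper_on_def by blast
  ultimately show ?thesis by (rule finite_subset)
qed

lemma avoid:
  fixes d d' :: "('a + 'b) \<Rightarrow> ('a + 'b) \<Rightarrow> real"
  assumes D: "d \<in> Dmetrics X dX Y dY" and pX: "proper_on X dX" and pY: "proper_on Y dY"
    and nb: "\<not> bdd_above {d' (Inl x) (Inr y) | x y. x \<in> X \<and> y \<in> Y \<and> d (Inl x) (Inr y) \<le> t}"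
    and A: "finite A" and B: "finite B"
  shows "\<exists>q. (fst q \<in> X \<and> snd q \<in> Y \<and> d (Inl (fst q)) (Inr (snd q)) \<le> t) \<and> fst q \<notin> A \<and> snd q \<notin> B
           \<and> L \<le> d' (Inl (fst q)) (Inr (snd q))"
proof -
  define G where "G = {q. (fst q \<in> X \<and> snd q \<in> Y \<and> d (Inl (fst q)) (Inr (snd q)) \<le> t) \<and> (fst q \<in> A \<or> snd q \<in> B)}"
  have "G \<subseteq> (\<Union>x\<in>A \<inter> X. {x} \<times> {y\<in>Y. d (Inl x) (Inr y) \<le> t}) \<union> (\<Union>y\<in>B \<inter> Y. {x\<in>X. d (Inl x) (Inr y) \<le> t} \<times> {y})"
    unfolding G_def by force
  moreover have "finite ((\<Union>x\<in>A \<inter> X. {x} \<times> {y\<in>Y. d (Inl x) (Inr y) \<le> t}) \<union> (\<Union>y\<in>B \<inter> Y. {x\<in>X. d (Inl x) (Inr y) \<le> t} \<times> {y}))"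
    using A B fin_ball_x[OF D pY] fin_ball_y[OF D pX] by auto
  ultimately have fG: "finite G" by (rule finite_subset)
  define M where "M = Max (insert L ((\<lambda>q. d' (Inl (fst q)) (Inr (snd q))) ` G))"
  have LM: "L \<le> M" unfolding M_def using fG by simp
  have GM: "q \<in> G \<Longrightarrow> d' (Inl (fst q)) (Inr (snd q)) \<le> M" for q unfolding M_def using fG by simp
  obtain x y where xy: "x \<in> X" "y \<in> Y" "d (Inl x) (Inr y) \<le> t" "\<not> d' (Inl x) (Inr y) \<le> M"
    using nb unfolding bdd_above_def by blast
  have "(x, y) \<notin> G" using GM[of "(x,y)"] xy by auto
  then show ?thesis using xy LM unfolding G_def by (intro exI[of _ "(x, y)"]) auto
qed

lemma opnorm_zero: "opnorm X Y (\<lambda>y x. 0) = 0"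
proof -
  have z: "l2norm Y (op_apply X (\<lambda>y x. 0) f) = 0" for f
    unfolding l2norm_def op_apply_def by simp
  have l2: "l2vec X (\<lambda>x. 0)" "l2norm X (\<lambda>x. 0) \<le> 1" unfolding l2vec_def l2norm_def by auto
  have "{l2norm Y (op_apply X (\<lambda>y x. 0) f) |f. l2vec X f \<and> l2norm X f \<le> 1} = {0}" (is "?S = _")
  proof
    show "?S \<subseteq> {0}" using z by auto
    have "l2norm Y (op_apply X (\<lambda>y x. 0) (\<lambda>x. 0)) \<in> ?S" using l2 by blast
    then show "{0} \<subseteq> ?S" using z by simp
  qed
  then show ?thesis unfolding opnorm_def by simp
qed

lemma bdd_lemma:
  assumes D: "d \<in> Dmetrics X dX Y dY" and pX: "proper_on X dX" and pY: "proper_on Y dY"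
    and MM: "Md X Y d \<subseteq> Md X Y d'"
  shows "bdd_above {d' (Inl x) (Inr y) | x y. x \<in> X \<and> y \<in> Y \<and> d (Inl x) (Inr y) \<le> t}"
proof (rule ccontr)
  assume nb: "\<not> ?thesis"
  obtain p :: "nat \<Rightarrow> 'a \<times> 'b" where injf: "inj (fst \<circ> p)" and injs: "inj (snd \<circ> p)"
    and P: "\<And>n. fst (p n) \<in> X \<and> snd (p n) \<in> Y \<and> d (Inl (fst (p n))) (Inr (snd (p n))) \<le> t"
    and W: "\<And>L. \<exists>n. L \<le> d' (Inl (fst (p n))) (Inr (snd (p n)))"
    using seq_choice[where P="\<lambda>q. fst q \<in> X \<and> snd q \<in> Y \<and> d (Inl (fst q)) (Inr (snd q)) \<le> t"
        and w="\<lambda>q. d' (Inl (fst q)) (Inr (snd q))", OF avoid[OF D pX pY nb]] by metis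
  have XY: "\<And>n. fst (p n) \<in> X \<and> snd (p n) \<in> Y" using P by blast
  define T where "T = (\<lambda>y x. if (x, y) \<in> range p then 1 else (0::complex))"
  have bT: "bounded_op X Y T" unfolding T_def by (rule pbij_bounded[OF injf injs XY])
  have fT: "finite_propagation X Y d T"
    unfolding finite_propagation_def
  proof (intro exI[of _ "t + 1"] ballI impI)
    fix x y assume le: "x \<in> X" "y \<in> Y" "t + 1 \<le> d (Inl x) (Inr y)"
    have "(x, y) \<notin> range p"
    proof
      assume "(x, y) \<in> range p"
      then obtain n where "p n = (x, y)" by (metis rangeE)
      then have "fst (p n) = x" "snd (p n) = y" by auto
      then show False using P[of n] le by auto
    qed
    then show "T y x = 0" unfolding T_def by simp
  qed
  have "T \<in> Md X Y d" unfolding Md_def using bT fT opnorm_zero[of X Y] by (auto intro!: exI[of _ T])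
  then have "T \<in> Md X Y d'" using MM by blast
  then have "\<forall>e>0. \<exists>S. bounded_op X Y S \<and> finite_propagation X Y d' S \<and>
                  opnorm X Y (\<lambda>y x. T y x - S y x) < e" unfolding Md_def by blast
  then obtain S where bS: "bounded_op X Y S" and fS: "finite_propagation X Y d' S"
    and nS: "opnorm X Y (\<lambda>y x. T y x - S y x) < 1"
    using zero_less_one by blast
  obtain L where L: "\<forall>x\<in>X. \<forall>y\<in>Y. d' (Inl x) (Inr y) \<ge> L \<longrightarrow> S y x = 0"
    using fS unfolding finite_propagation_def by blast
  obtain n where n: "L \<le> d' (Inl (fst (p n))) (Inr (snd (p n)))" using W by blast
  have S0: "S (snd (p n)) (fst (p n)) = 0" using L n XY by blast
  have T1: "T (snd (p n)) (fst (p n)) = 1" unfolding T_def by (metis prod.collapse rangeI)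
  have "cmod (T (snd (p n)) (fst (p n)) - S (snd (p n)) (fst (p n))) \<le> opnorm X Y (\<lambda>y x. T y x - S y x)"
    using entry_le_opnorm[OF bT bS] XY by blast
  then show False using S0 T1 nS by simp
qed



lemma D_nonneg:
  assumes "d \<in> Dmetrics X dX Y dY" "x \<in> X" "y \<in> Y"
  shows "d (Inl x) (Inr y) \<ge> 0"
  using assms unfolding Dmetrics_def metric_on_def by auto

lemma ce_sym: "coarsely_equivalent X Y d d' \<Longrightarrow> coarsely_equivalent X Y d' d"
  unfolding coarsely_equivalent_def by blast

lemma ce_fp:
  assumes ce: "coarsely_equivalent X Y d d'" and D: "d \<in> Dmetrics X dX Y dY"
    and fp: "finite_propagation X Y d S"
  shows "finite_propagation X Y d' S"
proof -
  obtain \<phi> :: "real \<Rightarrow> real" where mo: "mono_on {0..} \<phi>" and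
    le: "\<And>x y. x\<in>X \<Longrightarrow> y\<in>Y \<Longrightarrow> d' (Inl x) (Inr y) \<le> \<phi> (d (Inl x) (Inr y))"
    using ce unfolding coarsely_equivalent_def by blast
  obtain L where L: "\<forall>x\<in>X. \<forall>y\<in>Y. d (Inl x) (Inr y) \<ge> L \<longrightarrow> S y x = 0"
    using fp unfolding finite_propagation_def by blast
  show ?thesis unfolding finite_propagation_def
  proof (intro exI[of _ "\<phi> (max L 0) + 1"] ballI impI)
    fix x y assume xy: "x \<in> X" "y \<in> Y" and ge: "\<phi> (max L 0) + 1 \<le> d' (Inl x) (Inr y)"
    show "S y x = 0"
    proof (rule ccontr)
      assume "S y x \<noteq> 0"
      then have "d (Inl x) (Inr y) < L" using L xy by force
      moreover have "d (Inl x) (Inr y) \<ge> 0" using D_nonneg[OF D xy] .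
      ultimately have "\<phi> (d (Inl x) (Inr y)) \<le> \<phi> (max L 0)"
        using mo unfolding mono_on_def by auto
      then show False using le[OF xy] ge by linarith
    qed
  qed
qed

lemma part1:
  assumes ce: "coarsely_equivalent X Y d d'" and D: "d \<in> Dmetrics X dX Y dY"
    and D': "d' \<in> Dmetrics X dX Y dY"
  shows "Md X Y d' = Md X Y d"
  using ce_fp[OF ce D] ce_fp[OF ce_sym[OF ce] D'] unfolding Md_def by blast


theorem mainTheorem4:
  fixes X :: "'a set" and Y :: "'b set"
    and dX :: "'a \<Rightarrow> 'a \<Rightarrow> real" and dY :: "'b \<Rightarrow> 'b \<Rightarrow> real"
    and d d' :: "('a + 'b) \<Rightarrow> ('a + 'b) \<Rightarrow> real"
  assumes "countable X" and "countable Y"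
    and "discrete_metric_on X dX" and "discrete_metric_on Y dY"
    and "d \<in> Dmetrics X dX Y dY" and "d' \<in> Dmetrics X dX Y dY"
  shows "(coarsely_equivalent X Y d d' \<longrightarrow> Md X Y d' = Md X Y d)
       \<and> (uniformly_discrete_on X dX \<and> uniformly_discrete_on Y dY \<and>
          proper_on X dX \<and> proper_on Y dY \<longrightarrow>
          Md X Y d' = Md X Y d \<longrightarrow> coarsely_equivalent X Y d d')"
proof (intro conjI impI)
  show "Md X Y d' = Md X Y d" if "coarsely_equivalent X Y d d'"
    using part1[OF that assms(5) assms(6)] .
next
  assume h: "uniformly_discrete_on X dX \<and> uniformly_discrete_on Y dY \<and> proper_on X dX \<and> proper_on Y dY"
    and eq: "Md X Y d' = Md X Y d"
  have pX: "proper_on X dX" and pY: "proper_on Y dY" using h by auto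
  define B where "B = (\<lambda>t. {d' (Inl x) (Inr y) | x y. x \<in> X \<and> y \<in> Y \<and> d (Inl x) (Inr y) \<le> t}
     \<union> {d (Inl x) (Inr y) | x y. x \<in> X \<and> y \<in> Y \<and> d' (Inl x) (Inr y) \<le> t})"
  have bd: "bdd_above (insert 0 (B t))" for t
    unfolding B_def
    using bdd_lemma[OF assms(5) pX pY, of d' t] bdd_lemma[OF assms(6) pX pY, of d t] eq
    by auto
  define \<phi> where "\<phi> = (\<lambda>t. Sup (insert 0 (B t)))"
  have up: "v \<in> B t \<Longrightarrow> v \<le> \<phi> t" for v t
    unfolding \<phi>_def by (rule cSup_upper) (use bd in auto)
  show "coarsely_equivalent X Y d d'"
    unfolding coarsely_equivalent_def
  proof (intro exI[of _ \<phi>] conjI allI impI ballI)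
    show "mono_on {0..} \<phi>"
    proof (rule mono_onI)
      fix r s :: real assume "r \<in> {0..}" "s \<in> {0..}" "r \<le> s"
      then have "insert 0 (B r) \<subseteq> insert 0 (B s)" unfolding B_def by fastforce
      then show "\<phi> r \<le> \<phi> s" unfolding \<phi>_def by (intro cSup_subset_mono) (use bd in auto)
    qed
    show "0 \<le> \<phi> t" for t unfolding \<phi>_def by (rule cSup_upper) (use bd in auto)
    fix x y assume xy: "x \<in> X" "y \<in> Y"
    show "d' (Inl x) (Inr y) \<le> \<phi> (d (Inl x) (Inr y))"
      by (rule up) (use xy in \<open>auto simp: B_def\<close>)
    show "d (Inl x) (Inr y) \<le> \<phi> (d' (Inl x) (Inr y))"
      by (rule up) (use xy in \<open>auto simp: B_def\<close>)
  qed
qed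

end
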